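(* Let $G$ be a finite, simple, undirected, connected graph with at least two vertices and let $v \in V(G)$. The following statements are equivalent: (i) $v$ is the $\mathcal{L}$-root leaf of some DFS ordering of $G$ starting in $v$; (ii) $v$ is the $\mathcal{L}$-root leaf of every DFS ordering of $G$ starting in $v$; (iii) $v$ is the $\mathcal{L}$-root leaf of some MCS ordering of $G$; (iv) $v$ is the $\mathcal{L}$-root leaf of some GS ordering of $G$; (v) $v$ is an $\mathcal{L}$-branch leaf of some GS ordering of $G$; (vi) $v$ is an $\mathcal{F}$-branch leaf of some GS ordering of $G$; (vii) $v$ is the end-vertex (last vertex) of some GS ordering of $G$; (viii) $v$ is not a cut vertex of $G$.
   Context: A vertex ordering of $G$ is a bijection $\sigma:\{1,\dots,n\}\to V(G)$; $u \prec_\sigma w$ means $u$ comes before $w$. Searches are defined by the following label search: initially every vertex has label $\emptyset$; for $i=1,\dots,n$, choose any unnumbered vertex $x$ such that there is no unnumbered $y$ with $\mathrm{label}(x) \prec_{\mathcal{A}} \mathrm{label}(y)$, set $\sigma(i)=x$, and add $i$ to the labels of all unnumbered neighbors of $x$. The orderings produced this way are the $\mathcal{A}$-orderings. Generic Search (GS): $A \prec B$ iff $A=\emptyset$ and $B\neq\emptyset$. Depth First Search (DFS): $A \prec B$ iff ($A=\emptyset$ and $B\neq\emptyset$) or $\max(A)<\max(B)$. Maximum Cardinality Search (MCS): $A \prec B$ iff $|A|<|B|$. For a GS ordering $\sigma$ of a connected graph $G$, the $\mathcal{F}$-tree of $\sigma$ is the spanning tree containing, for each vertex $v\neq\sigma(1)$,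 the edge from $v$ to its leftmost neighbor in $\sigma$; the $\mathcal{L}$-tree of $\sigma$ contains, for each $v \neq \sigma(1)$, the edge from $v$ to its rightmost neighbor $w$ with $w \prec_\sigma v$. A vertex is an $\mathcal{F}$-leaf ($\mathcal{L}$-leaf) of $\sigma$ if it is a leaf of the $\mathcal{F}$-tree ($\mathcal{L}$-tree) of $\sigma$; it is the $\mathcal{F}$-root leaf ($\mathcal{L}$-root leaf) if additionally it is $\sigma(1)$, and an $\mathcal{F}$-branch leaf ($\mathcal{L}$-branch leaf) otherwise. *)

theory Defs
  imports Main
begin

definition simple_graph :: "'a set \<Rightarrow> ('a \<Rightarrow> 'a \<Rightarrow> bool) \<Rightarrow> bool" where
  "simple_graph V E \<longleftrightarrow> finite V \<and> (\<forall>x y. E x y \<longrightarrow> E y x) \<and> (\<forall>x. \<not> E x x)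
     \<and> (\<forall>x y. E x y \<longrightarrow> x \<in> V \<and> y \<in> V)"

definition connected_on :: "'a set \<Rightarrow> ('a \<Rightarrow> 'a \<Rightarrow> bool) \<Rightarrow> bool" where
  "connected_on S E \<longleftrightarrow>
     (\<forall>u\<in>S. \<forall>w\<in>S. (\<lambda>x y. E x y \<and> x \<in> S \<and> y \<in> S)\<^sup>*\<^sup>* u w)"

definition cut_vertex :: "'a set \<Rightarrow> ('a \<Rightarrow> 'a \<Rightarrow> bool) \<Rightarrow> 'a \<Rightarrow> bool" where
  "cut_vertex V E v \<longleftrightarrow> v \<in> V \<and> \<not> connected_on (V - {v}) E"

text \<open>Vertex orderings are lists sigma; sigma(i) (1-based) is sigma ! (i-1).\<close>
definition vertex_ordering :: "'a set \<Rightarrow> 'a list \<Rightarrow> bool" where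
  "vertex_ordering V \<sigma> \<longleftrightarrow> distinct \<sigma> \<and> set \<sigma> = V"

text \<open>Label of an unnumbered vertex x just before step i+1 (i.e. after sigma(1..i) are
  numbered): the set of numbers j \<le> i such that sigma(j) is a neighbour of x.\<close>
definition lbl :: "('a \<Rightarrow> 'a \<Rightarrow> bool) \<Rightarrow> 'a list \<Rightarrow> nat \<Rightarrow> 'a \<Rightarrow> nat set" where
  "lbl E \<sigma> i x = {Suc j | j. j < i \<and> E (\<sigma> ! j) x}"

definition label_search_ordering ::
  "(nat set \<Rightarrow> nat set \<Rightarrow> bool) \<Rightarrow> 'a set \<Rightarrow> ('a \<Rightarrow> 'a \<Rightarrow> bool) \<Rightarrow> 'a list \<Rightarrow> bool" where
  "label_search_ordering prec V E \<sigma> \<longleftrightarrow> vertex_ordering V \<sigma> \<and>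
     (\<forall>i < length \<sigma>. \<forall>y \<in> set (drop (Suc i) \<sigma>).
        \<not> prec (lbl E \<sigma> i (\<sigma> ! i)) (lbl E \<sigma> i y))"

definition gs_prec :: "nat set \<Rightarrow> nat set \<Rightarrow> bool" where
  "gs_prec A B \<longleftrightarrow> A = {} \<and> B \<noteq> {}"

definition dfs_prec :: "nat set \<Rightarrow> nat set \<Rightarrow> bool" where
  "dfs_prec A B \<longleftrightarrow> (A = {} \<and> B \<noteq> {}) \<or> (A \<noteq> {} \<and> B \<noteq> {} \<and> Max A < Max B)"

definition mcs_prec :: "nat set \<Rightarrow> nat set \<Rightarrow> bool" where
  "mcs_prec A B \<longleftrightarrow> card A < card B"

abbreviation "GS_ordering \<equiv> label_search_ordering gs_prec"
abbreviation "DFS_ordering \<equiv> label_search_ordering dfs_prec"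
abbreviation "MCS_ordering \<equiv> label_search_ordering mcs_prec"

definition F_parent :: "('a \<Rightarrow> 'a \<Rightarrow> bool) \<Rightarrow> 'a list \<Rightarrow> 'a \<Rightarrow> 'a" where
  "F_parent E \<sigma> v = hd (filter (E v) \<sigma>)"

definition L_parent :: "('a \<Rightarrow> 'a \<Rightarrow> bool) \<Rightarrow> 'a list \<Rightarrow> 'a \<Rightarrow> 'a" where
  "L_parent E \<sigma> v = last (filter (E v) (takeWhile (\<lambda>x. x \<noteq> v) \<sigma>))"

definition tree_edge :: "'a list \<Rightarrow> ('a \<Rightarrow> 'a) \<Rightarrow> 'a \<Rightarrow> 'a \<Rightarrow> bool" where
  "tree_edge \<sigma> p u w \<longleftrightarrow> (u \<in> set \<sigma> \<and> u \<noteq> hd \<sigma> \<and> w = p u) \<or> (w \<in> set \<sigma> \<and> w \<noteq> hd \<sigma> \<and> u = p w)"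

definition tree_leaf :: "'a list \<Rightarrow> ('a \<Rightarrow> 'a) \<Rightarrow> 'a \<Rightarrow> bool" where
  "tree_leaf \<sigma> p v \<longleftrightarrow> v \<in> set \<sigma> \<and> card {w \<in> set \<sigma>. tree_edge \<sigma> p v w} = 1"

definition F_leaf where "F_leaf E \<sigma> v \<longleftrightarrow> tree_leaf \<sigma> (F_parent E \<sigma>) v"
definition L_leaf where "L_leaf E \<sigma> v \<longleftrightarrow> tree_leaf \<sigma> (L_parent E \<sigma>) v"

definition F_root_leaf where "F_root_leaf E \<sigma> v \<longleftrightarrow> F_leaf E \<sigma> v \<and> v = hd \<sigma>"
definition F_branch_leaf where "F_branch_leaf E \<sigma> v \<longleftrightarrow> F_leaf E \<sigma> v \<and> v \<noteq> hd \<sigma>"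
definition L_root_leaf where "L_root_leaf E \<sigma> v \<longleftrightarrow> L_leaf E \<sigma> v \<and> v = hd \<sigma>"
definition L_branch_leaf where "L_branch_leaf E \<sigma> v \<longleftrightarrow> L_leaf E \<sigma> v \<and> v \<noteq> hd \<sigma>"

end

theory Submission
  imports Defs
begin


definition Ron :: "'a set \<Rightarrow> ('a \<Rightarrow> 'a \<Rightarrow> bool) \<Rightarrow> 'a \<Rightarrow> 'a \<Rightarrow> bool" where
  "Ron S E = (\<lambda>x y. E x y \<and> x \<in> S \<and> y \<in> S)"

lemma connected_on_Ron: "connected_on S E \<longleftrightarrow> (\<forall>u\<in>S. \<forall>w\<in>S. (Ron S E)\<^sup>*\<^sup>* u w)"
  by (simp add: connected_on_def Ron_def)

lemma Ron_sym: "(\<forall>x y. E x y \<longrightarrow> E y x) \<Longrightarrow> (Ron S E)\<^sup>*\<^sup>* a b \<Longrightarrow> (Ron S E)\<^sup>*\<^sup>* b a"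
proof -
  assume s: "\<forall>x y. E x y \<longrightarrow> E y x" and r: "(Ron S E)\<^sup>*\<^sup>* a b"
  have "symp (Ron S E)" unfolding symp_def Ron_def using s by blast
  then have "symp (Ron S E)\<^sup>*\<^sup>*" by (rule symp_rtranclp)
  then show ?thesis using r by (rule sympD)
qed

lemma lbl_eq: "lbl E s i x = Suc ` {j. j < i \<and> E (s ! j) x}"
  unfolding lbl_def by blast
lemma lbl_finite: "finite (lbl E s i x)"
  unfolding lbl_eq by simp
lemma lbl_append: "i \<le> length s \<Longrightarrow> lbl E (s @ t) i x = lbl E s i x"
  unfolding lbl_eq by (rule arg_cong[where f="image Suc"]) (auto simp: nth_append)

lemma crossing:
  assumes "connected_on S E" "A \<subseteq> S" "a0 \<in> A" "b0 \<in> S - A"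
  shows "\<exists>a\<in>A. \<exists>b\<in>S - A. E a b"
proof -
  have "(Ron S E)\<^sup>*\<^sup>* a0 b0" using assms by (auto simp: connected_on_Ron)
  then have "b0 \<notin> A \<longrightarrow> (\<exists>a\<in>A. \<exists>b\<in>S - A. E a b)"
  proof (induction rule: rtranclp_induct)
    case base
    then show ?case using assms by auto
  next
    case (step y z)
    then show ?case by (auto simp: Ron_def)
  qed
  then show ?thesis using assms by auto
qed

lemma in_take_nth: "x \<in> set (take i s) \<Longrightarrow> \<exists>j<i. j < length s \<and> x = s ! j"
proof -
  assume "x \<in> set (take i s)"
  then obtain k where "k < length (take i s)" "x = take i s ! k" by (metis in_set_conv_nth)
  then show ?thesis by (intro exI[of _ k]) simp
qed
lemma in_drop_nth: "x \<in> set (drop i s) \<Longrightarrow> \<exists>j. i \<le> j \<and> j < length s \<and> x = s ! j"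
proof -
  assume "x \<in> set (drop i s)"
  then obtain k where "k < length (drop i s)" "x = drop i s ! k" by (metis in_set_conv_nth)
  then show ?thesis by (intro exI[of _ "i + k"]) simp
qed

lemma nth_in_take: "j < i \<Longrightarrow> j < length s \<Longrightarrow> s ! j \<in> set (take i s)"
proof -
  assume "j < i" "j < length s"
  then have "take i s ! j = s ! j" "j < length (take i s)" by auto
  then show ?thesis by (metis nth_mem)
qed
lemma nth_in_drop: "i \<le> j \<Longrightarrow> j < length s \<Longrightarrow> s ! j \<in> set (drop i s)"
proof -
  assume "i \<le> j" "j < length s"
  then have "drop i s ! (j - i) = s ! j" "j - i < length (drop i s)" by auto
  then show ?thesis by (metis nth_mem)
qed

lemma set_split3: "i < length s \<Longrightarrow> set s = set (take i s) \<union> {s ! i} \<union> set (drop (Suc i) s)"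
proof -
  assume "i < length s"
  then have e: "s = take i s @ s ! i # drop (Suc i) s" by (rule id_take_nth_drop)
  have "set s = set (take i s @ s ! i # drop (Suc i) s)" using e by (rule arg_cong)
  also have "\<dots> = set (take i s) \<union> {s ! i} \<union> set (drop (Suc i) s)" by auto
  finally show ?thesis .
qed

lemma dfs_gs: "DFS_ordering V E s \<Longrightarrow> GS_ordering V E s"
  by (auto simp: label_search_ordering_def gs_prec_def dfs_prec_def)

lemma mcs_gs: "MCS_ordering V E s \<Longrightarrow> GS_ordering V E s"
  unfolding label_search_ordering_def gs_prec_def mcs_prec_def
  by (metis card_gt_0_iff card.empty lbl_finite)

lemma nth_notin_take: "distinct s \<Longrightarrow> i < length s \<Longrightarrow> s ! i \<notin> set (take i s)"
  by (metis in_take_nth nth_eq_iff_index_eq order_less_irrefl)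

lemma nth_notin_drop: "distinct s \<Longrightarrow> j < i \<Longrightarrow> j < length s \<Longrightarrow> s ! j \<notin> set (drop i s)"
  by (metis in_drop_nth nth_eq_iff_index_eq leD)



lemma gs_earlier:
  assumes gs: "GS_ordering V E s" and c: "connected_on V E" and i: "0 < i" "i < length s"
  shows "\<exists>j<i. E (s ! j) (s ! i)"
proof (rule ccontr)
  assume no: "\<not> (\<exists>j<i. E (s ! j) (s ! i))"
  have vo: "distinct s" "set s = V" using gs by (auto simp: label_search_ordering_def vertex_ordering_def)
  have l0: "lbl E s i (s ! i) = {}" using no unfolding lbl_def by blast
  have "\<forall>y\<in>set (drop (Suc i) s). \<not> gs_prec (lbl E s i (s ! i)) (lbl E s i y)"
    using gs i unfolding label_search_ordering_def by blast
  then have rest: "\<forall>y\<in>set (drop (Suc i) s). lbl E s i y = {}"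
    using l0 unfolding gs_prec_def by blast
  have h1: "s ! 0 \<in> set (take i s)" using i by (intro nth_in_take) auto
  have h2: "s ! i \<in> V - set (take i s)"
    using vo i nth_notin_take by (metis DiffI nth_mem)
  have h3: "set (take i s) \<subseteq> V" using vo by (metis set_take_subset)
  obtain a b where ab: "a \<in> set (take i s)" "b \<in> V - set (take i s)" "E a b"
    using crossing[OF c h3 h1 h2] by blast
  obtain j where j: "j < i" "a = s ! j" using in_take_nth[OF ab(1)] by blast
  show False
  proof (cases "b = s ! i")
    case True then show ?thesis using no j ab by blast
  next
    case False
    have "b \<in> set s" using ab vo by blast
    then have "b \<in> set (drop (Suc i) s)" using ab(2) False set_split3[OF i(2)] by blast
    moreover have "Suc j \<in> lbl E s i b" using j ab unfolding lbl_def by blast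
    ultimately show ?thesis using rest by blast
  qed
qed


lemma takeWhile_nth: "distinct s \<Longrightarrow> i < length s \<Longrightarrow> takeWhile (\<lambda>x. x \<noteq> s ! i) s = take i s"
proof -
  assume d: "distinct s" and i: "i < length s"
  have e: "s = take i s @ s ! i # drop (Suc i) s" using i by (rule id_take_nth_drop)
  have nt: "\<And>x. x \<in> set (take i s) \<Longrightarrow> x \<noteq> s ! i" using nth_notin_take[OF d i] by blast
  have "takeWhile (\<lambda>x. x \<noteq> s ! i) s = takeWhile (\<lambda>x. x \<noteq> s ! i) (take i s @ s ! i # drop (Suc i) s)"
    using e by (rule arg_cong)
  also have "\<dots> = take i s @ takeWhile (\<lambda>x. x \<noteq> s ! i) (s ! i # drop (Suc i) s)"
    by (rule takeWhile_append2) (rule nt)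
  also have "\<dots> = take i s" by simp
  finally show ?thesis .
qed

lemma L_parent_nth: "distinct s \<Longrightarrow> i < length s \<Longrightarrow> L_parent E s (s ! i) = last (filter (E (s ! i)) (take i s))"
  unfolding L_parent_def by (simp only: takeWhile_nth)

lemma last_filter_in: "filter P xs \<noteq> [] \<Longrightarrow> last (filter P xs) \<in> set xs \<and> P (last (filter P xs))"
proof -
  assume "filter P xs \<noteq> []"
  then have "last (filter P xs) \<in> set (filter P xs)" by (rule last_in_set)
  then show ?thesis by simp
qed

lemma hd_filter_in: "filter P xs \<noteq> [] \<Longrightarrow> hd (filter P xs) \<in> set xs \<and> P (hd (filter P xs))"
proof -
  assume "filter P xs \<noteq> []"
  then have "hd (filter P xs) \<in> set (filter P xs)" by (rule hd_in_set)
  then show ?thesis by simp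
qed

lemma filter_ne: "x \<in> set xs \<Longrightarrow> P x \<Longrightarrow> filter P xs \<noteq> []"
  by (metis filter_empty_conv)

lemma L_parent_prop:
  assumes gs: "GS_ordering V E s" and c: "connected_on V E" and sym: "\<forall>x y. E x y \<longrightarrow> E y x"
    and i: "0 < i" "i < length s"
  shows "\<exists>j<i. L_parent E s (s ! i) = s ! j \<and> E (s ! i) (s ! j)"
proof -
  have d: "distinct s" using gs by (simp add: label_search_ordering_def vertex_ordering_def)
  obtain j0 where j0: "j0 < i" "E (s ! j0) (s ! i)" using gs_earlier[OF gs c i] by blast
  have "s ! j0 \<in> set (take i s)" using j0 i by (intro nth_in_take) auto
  moreover have "E (s ! i) (s ! j0)" using sym j0 by blast
  ultimately have "filter (E (s ! i)) (take i s) \<noteq> []" by (rule filter_ne)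
  then have "last (filter (E (s ! i)) (take i s)) \<in> set (take i s) \<and> E (s ! i) (last (filter (E (s ! i)) (take i s)))"
    by (rule last_filter_in)
  moreover have "L_parent E s (s ! i) = last (filter (E (s ! i)) (take i s))"
    using d i(2) by (rule L_parent_nth)
  ultimately have m: "L_parent E s (s ! i) \<in> set (take i s)" "E (s ! i) (L_parent E s (s ! i))" by simp_all
  obtain j where "j < i" "L_parent E s (s ! i) = s ! j" using in_take_nth[OF m(1)] by blast
  then show ?thesis using m(2) by auto
qed

lemma F_parent_prop:
  assumes gs: "GS_ordering V E s" and c: "connected_on V E" and sym: "\<forall>x y. E x y \<longrightarrow> E y x"
    and i: "0 < i" "i < length s"
  shows "\<exists>j<i. F_parent E s (s ! i) = s ! j \<and> E (s ! i) (s ! j)"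
proof -
  obtain j0 where j0: "j0 < i" "E (s ! j0) (s ! i)" using gs_earlier[OF gs c i] by blast
  have "s ! j0 \<in> set (take i s)" using j0 i by (intro nth_in_take) auto
  moreover have "E (s ! i) (s ! j0)" using sym j0 by blast
  ultimately have ne: "filter (E (s ! i)) (take i s) \<noteq> []" by (rule filter_ne)
  have "filter (E (s ! i)) s = filter (E (s ! i)) (take i s) @ filter (E (s ! i)) (drop i s)"
    by (metis append_take_drop_id filter_append)
  then have "F_parent E s (s ! i) = hd (filter (E (s ! i)) (take i s))"
    unfolding F_parent_def using ne by simp
  moreover have "hd (filter (E (s ! i)) (take i s)) \<in> set (take i s) \<and> E (s ! i) (hd (filter (E (s ! i)) (take i s)))"
    using ne by (rule hd_filter_in)
  ultimately have m: "F_parent E s (s ! i) \<in> set (take i s)" "E (s ! i) (F_parent E s (s ! i))" by simp_all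
  obtain j where "j < i" "F_parent E s (s ! i) = s ! j" using in_take_nth[OF m(1)] by blast
  then show ?thesis using m(2) by auto
qed

lemma L_parent_not0:
  assumes d: "distinct s" and ij: "0 < j" "j < i" "i < length s" and e: "E (s ! i) (s ! j)"
  shows "L_parent E s (s ! i) \<noteq> s ! 0"
proof -
  define xs where "xs = take i s"
  have dx: "distinct xs" using d by (simp add: xs_def)
  have lx: "j < length xs" using ij by (simp add: xs_def)
  have xj: "xs ! j = s ! j" "xs ! 0 = s ! 0" using ij by (simp_all add: xs_def)
  have "filter (E (s ! i)) xs = filter (E (s ! i)) (take j xs) @ filter (E (s ! i)) (drop j xs)"
    by (metis append_take_drop_id filter_append)
  moreover have "s ! j \<in> set (drop j xs)" using nth_in_drop[of j j xs] lx xj by simp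
  then have ne: "filter (E (s ! i)) (drop j xs) \<noteq> []" using e by (rule filter_ne)
  ultimately have "last (filter (E (s ! i)) xs) = last (filter (E (s ! i)) (drop j xs))"
    by simp
  moreover have "last (filter (E (s ! i)) (drop j xs)) \<in> set (drop j xs)"
    using last_filter_in[OF ne] by blast
  moreover have "xs ! 0 \<notin> set (drop j xs)" using nth_notin_drop[OF dx ij(1)] lx by (meson le_less_trans zero_le)
  moreover have "L_parent E s (s ! i) = last (filter (E (s ! i)) xs)"
    unfolding xs_def using d ij(3) by (rule L_parent_nth)
  ultimately show ?thesis using xj by metis
qed

lemma L_parent_1:
  assumes d: "distinct s" and l: "1 < length s" and e: "E (s ! 1) (s ! 0)"
  shows "L_parent E s (s ! 1) = s ! 0"
proof -
  have "take 1 s = [s ! 0]" using l by (cases s) auto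
  then show ?thesis using L_parent_nth[OF d l, of E] e by simp
qed



lemma leaf_connected:
  assumes d: "distinct s" and sym: "\<forall>x y. E x y \<longrightarrow> E y x" and len: "2 \<le> length s"
    and par: "\<forall>i. 0 < i \<and> i < length s \<longrightarrow> (\<exists>j<i. p (s ! i) = s ! j \<and> E (s ! i) (s ! j))"
    and leaf: "tree_leaf s p v"
  shows "connected_on (set s - {v}) E"
proof -
  define S where "S = set s - {v}"
  define T where "T = {w \<in> set s. tree_edge s p v w}"
  have vin: "v \<in> set s" and cT: "card T = 1" using leaf by (simp_all add: tree_leaf_def T_def)
  obtain c where Tc: "T = {c}" using cT by (rule card_1_singletonE)
  have ne: "s \<noteq> []" using len by auto
  have hd0: "hd s = s ! 0" using ne by (rule hd_conv_nth)
  have K: "\<exists>t \<in> S. (s ! 0 = v \<or> s ! 0 = t) \<and>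
      (\<forall>i. 0 < i \<and> i < length s \<longrightarrow> s ! i \<noteq> v \<longrightarrow> s ! i \<noteq> t \<longrightarrow> p (s ! i) \<noteq> v)"
  proof (cases "v = s ! 0")
    case True
    have "c \<in> T" using Tc by simp
    then have c: "c \<in> set s" "c \<noteq> hd s" "v = p c" using True hd0 by (auto simp: T_def tree_edge_def)
    have "c \<in> S" using c True hd0 by (simp add: S_def)
    moreover have "\<forall>i. 0 < i \<and> i < length s \<longrightarrow> s ! i \<noteq> v \<longrightarrow> s ! i \<noteq> c \<longrightarrow> p (s ! i) \<noteq> v"
    proof (intro allI impI)
      fix i assume i: "0 < i \<and> i < length s" and a: "s ! i \<noteq> v" "s ! i \<noteq> c"
      show "p (s ! i) \<noteq> v"
      proof
        assume pv: "p (s ! i) = v"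
        have "s ! i \<in> set s" using i by simp
        moreover have "s ! i \<noteq> hd s" using a True hd0 by simp
        ultimately have "s ! i \<in> T" using pv by (simp add: T_def tree_edge_def)
        then show False using Tc a by simp
      qed
    qed
    ultimately show ?thesis using True by blast
  next
    case False
    obtain k where k: "k < length s" "v = s ! k" using vin by (metis in_set_conv_nth)
    have k0: "0 < k" using k False by (cases k) auto
    obtain j' where j': "j' < k" "p (s ! k) = s ! j'" using par k k0 by blast
    have "v \<noteq> hd s" using False hd0 by simp
    moreover have "p v \<in> set s" using j' k by simp
    ultimately have pvT: "p v \<in> T" using vin by (simp add: T_def tree_edge_def)
    have "s ! 0 \<in> S" using False ne by (simp add: S_def)
    moreover have "\<forall>i. 0 < i \<and> i < length s \<longrightarrow> s ! i \<noteq> v \<longrightarrow> s ! i \<noteq> s ! 0 \<longrightarrow> p (s ! i) \<noteq> v"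
    proof (intro allI impI)
      fix i assume i: "0 < i \<and> i < length s" and a: "s ! i \<noteq> v" "s ! i \<noteq> s ! 0"
      show "p (s ! i) \<noteq> v"
      proof
        assume pv: "p (s ! i) = v"
        have "s ! i \<in> set s" using i by simp
        moreover have "s ! i \<noteq> hd s" using a hd0 by simp
        ultimately have "s ! i \<in> T" using pv by (simp add: T_def tree_edge_def)
        then have "s ! i = p v" using pvT Tc by simp
        then have e1: "s ! i = s ! j'" using j' k by simp
        have "i = j'" using nth_eq_iff_index_eq[OF d] e1 i j' k by (meson order.strict_trans)
        obtain j'' where j'': "j'' < i" "p (s ! i) = s ! j''" using par i by blast
        have "s ! k = s ! j''" using j'' pv k by simp
        then have "k = j''" using nth_eq_iff_index_eq[OF d] k j'' i by (meson order.strict_trans)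
        then show False using j' j'' \<open>i = j'\<close> by simp
      qed
    qed
    ultimately show ?thesis by blast
  qed
  then obtain t where t: "t \<in> S" "s ! 0 = v \<or> s ! 0 = t"
    and tK: "\<forall>i. 0 < i \<and> i < length s \<longrightarrow> s ! i \<noteq> v \<longrightarrow> s ! i \<noteq> t \<longrightarrow> p (s ! i) \<noteq> v" by blast
  have reach: "i < length s \<longrightarrow> s ! i \<noteq> v \<longrightarrow> (Ron S E)\<^sup>*\<^sup>* (s ! i) t" for i
  proof (induction i rule: less_induct)
    case (less i)
    show ?case
    proof (intro impI)
      assume i: "i < length s" and a: "s ! i \<noteq> v"
      show "(Ron S E)\<^sup>*\<^sup>* (s ! i) t"
      proof (cases "s ! i = t")
        case True then show ?thesis by simp
      next
        case False
        then have i0: "0 < i" using t a by (cases i) auto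
        obtain j where j: "j < i" "p (s ! i) = s ! j" "E (s ! i) (s ! j)" using par i i0 by blast
        have "s ! j \<noteq> v" using tK i i0 a False j by metis
        then have r: "(Ron S E)\<^sup>*\<^sup>* (s ! j) t" using less j i by simp
        have "Ron S E (s ! i) (s ! j)" using j i a \<open>s ! j \<noteq> v\<close> by (simp add: Ron_def S_def)
        then show ?thesis using r by (rule converse_rtranclp_into_rtranclp)
      qed
    qed
  qed
  have rS: "(Ron S E)\<^sup>*\<^sup>* u t" if "u \<in> S" for u
  proof -
    have u: "u \<in> set s" "u \<noteq> v" using that unfolding S_def by simp_all
    obtain i where i: "i < length s" "u = s ! i" using u(1) by (metis in_set_conv_nth)
    show ?thesis using reach[of i] i u(2) by simp
  qed
  have "\<forall>u\<in>S. \<forall>w\<in>S. (Ron S E)\<^sup>*\<^sup>* u w"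
  proof (intro ballI)
    fix u w assume "u \<in> S" "w \<in> S"
    then have "(Ron S E)\<^sup>*\<^sup>* u t" "(Ron S E)\<^sup>*\<^sup>* t w" using rS Ron_sym[OF sym] by blast+
    then show "(Ron S E)\<^sup>*\<^sup>* u w" by (rule rtranclp_trans)
  qed
  then show ?thesis unfolding S_def connected_on_Ron by simp
qed



lemma last_leaf:
  assumes d: "distinct s" and len: "2 \<le> length s"
    and par: "\<forall>i. 0 < i \<and> i < length s \<longrightarrow> (\<exists>j<i. p (s ! i) = s ! j \<and> E (s ! i) (s ! j))"
  shows "tree_leaf s p (last s) \<and> last s \<noteq> hd s"
proof -
  define n where "n = length s"
  have ne: "s \<noteq> []" using len by auto
  have hd0: "hd s = s ! 0" using ne by (rule hd_conv_nth)
  have lv: "last s = s ! (n - 1)" using ne by (simp add: last_conv_nth n_def)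
  have n1: "0 < n - 1" "n - 1 < length s" using len by (simp_all add: n_def)
  have vh: "last s \<noteq> hd s" using lv hd0 nth_eq_iff_index_eq[OF d] n1 by (metis less_not_refl3 order.strict_trans)
  obtain j where j: "j < n - 1" "p (s ! (n - 1)) = s ! j" using par n1 by blast
  have "{w \<in> set s. tree_edge s p (last s) w} = {p (last s)}"
  proof (intro set_eqI iffI)
    fix w assume w: "w \<in> {w \<in> set s. tree_edge s p (last s) w}"
    then have ws: "w \<in> set s" and te: "tree_edge s p (last s) w" by simp_all
    obtain i where i: "i < length s" "w = s ! i" using ws by (metis in_set_conv_nth)
    show "w \<in> {p (last s)}"
    proof (rule ccontr)
      assume nw: "w \<notin> {p (last s)}"
      then have "w \<noteq> hd s" "last s = p w" using te by (auto simp: tree_edge_def)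
      then have i0: "0 < i" using i hd0 by (cases i) auto
      obtain j'' where j'': "j'' < i" "p (s ! i) = s ! j''" using par i i0 by blast
      have "s ! (n - 1) = s ! j''" using j'' \<open>last s = p w\<close> i lv by simp
      then have "n - 1 = j''" using nth_eq_iff_index_eq[OF d] n1 j'' i by (meson order.strict_trans)
      then show False using j'' i n_def by simp
    qed
  next
    fix w assume "w \<in> {p (last s)}"
    then have "w = p (last s)" by simp
    moreover have "p (last s) \<in> set s" using j lv n1 by simp
    ultimately show "w \<in> {w \<in> set s. tree_edge s p (last s) w}"
      using vh ne by (simp add: tree_edge_def)
  qed
  then show ?thesis using vh ne by (simp add: tree_leaf_def)
qed

lemma root_leaf_crit:
  assumes d: "distinct s" and len: "2 \<le> length s" and e1: "E (s ! 1) (s ! 0)"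
    and crit: "\<forall>i. 2 \<le> i \<and> i < length s \<longrightarrow> (\<exists>j. 0 < j \<and> j < i \<and> E (s ! i) (s ! j))"
  shows "L_root_leaf E s (hd s)"
proof -
  have ne: "s \<noteq> []" using len by auto
  have hd0: "hd s = s ! 0" using ne by (rule hd_conv_nth)
  have l1: "1 < length s" using len by simp
  have p1: "L_parent E s (s ! 1) = s ! 0" using d l1 e1 by (rule L_parent_1)
  have "(s ! 1 = s ! 0) = (1 = (0::nat))" using d l1 by (rule nth_eq_iff_index_eq) (use l1 in linarith)
  then have s10: "s ! 1 \<noteq> s ! 0" by simp
  have "{w \<in> set s. tree_edge s (L_parent E s) (hd s) w} = {s ! 1}"
  proof (intro set_eqI iffI)
    fix w assume w: "w \<in> {w \<in> set s. tree_edge s (L_parent E s) (hd s) w}"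
    then have ws: "w \<in> set s" and te: "tree_edge s (L_parent E s) (hd s) w" by simp_all
    then have wh: "w \<noteq> hd s" and pw: "hd s = L_parent E s w" by (auto simp: tree_edge_def)
    obtain i where i: "i < length s" "w = s ! i" using ws by (metis in_set_conv_nth)
    have i0: "0 < i" using wh i hd0 by (cases i) auto
    show "w \<in> {s ! 1}"
    proof (cases "i = 1")
      case True then show ?thesis using i by simp
    next
      case False
      then have "2 \<le> i" using i0 by simp
      then obtain j where j: "0 < j" "j < i" "E (s ! i) (s ! j)" using crit i by blast
      have "L_parent E s (s ! i) \<noteq> s ! 0" using d j(1,2) i(1) j(3) by (rule L_parent_not0)
      then show ?thesis using pw i hd0 by simp
    qed
  next
    fix w assume "w \<in> {s ! 1}"
    then have "w = s ! 1" by simp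
    then show "w \<in> {w \<in> set s. tree_edge s (L_parent E s) (hd s) w}"
      using p1 s10 hd0 l1 by (simp add: tree_edge_def)
  qed
  then show ?thesis using ne by (simp add: L_root_leaf_def L_leaf_def tree_leaf_def)
qed



definition valid :: "(nat set \<Rightarrow> nat set \<Rightarrow> bool) \<Rightarrow> 'a set \<Rightarrow> ('a \<Rightarrow> 'a \<Rightarrow> bool) \<Rightarrow> 'a list \<Rightarrow> bool" where
  "valid p V E s \<longleftrightarrow> distinct s \<and> set s \<subseteq> V \<and>
     (\<forall>i<length s. \<forall>y\<in>V - set (take (Suc i) s). \<not> p (lbl E s i (s ! i)) (lbl E s i y))"

lemma valid_snoc:
  assumes v: "valid p V E s" and x: "x \<in> V - set s"
    and m: "\<forall>y\<in>V - set s. \<not> p (lbl E s (length s) x) (lbl E s (length s) y)"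
  shows "valid p V E (s @ [x])"
  unfolding valid_def
proof (intro conjI allI impI ballI)
  show "distinct (s @ [x])" using v x by (simp add: valid_def)
  show "set (s @ [x]) \<subseteq> V" using v x by (simp add: valid_def)
  fix i y assume i: "i < length (s @ [x])" and y: "y \<in> V - set (take (Suc i) (s @ [x]))"
  show "\<not> p (lbl E (s @ [x]) i ((s @ [x]) ! i)) (lbl E (s @ [x]) i y)"
  proof (cases "i < length s")
    case True
    have "take (Suc i) (s @ [x]) = take (Suc i) s" using True by simp
    moreover have "(s @ [x]) ! i = s ! i" using True by (simp add: nth_append)
    moreover have "lbl E (s @ [x]) i = lbl E s i" using True by (intro ext lbl_append) simp
    ultimately show ?thesis using v True y by (simp add: valid_def)
  next
    case False
    then have ii: "i = length s" using i by simp
    have "take (Suc i) (s @ [x]) = s @ [x]" using ii by simp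
    moreover have "(s @ [x]) ! i = x" using ii by simp
    moreover have "lbl E (s @ [x]) i = lbl E s (length s)" unfolding ii by (intro ext lbl_append) simp
    ultimately show ?thesis using m y by simp
  qed
qed

lemma valid_full:
  assumes v: "valid p V E s" and f: "set s = V"
  shows "label_search_ordering p V E s"
  unfolding label_search_ordering_def vertex_ordering_def
proof (intro conjI allI impI ballI)
  show "distinct s" using v by (simp add: valid_def)
  show "set s = V" by (rule f)
  fix i y assume i: "i < length s" and y: "y \<in> set (drop (Suc i) s)"
  have "y \<notin> set (take (Suc i) s)"
    using set_take_disj_set_drop_if_distinct[of s "Suc i" "Suc i"] v y by (auto simp: valid_def)
  moreover have "y \<in> V" using y f by (metis in_set_dropD)
  ultimately show "\<not> p (lbl E s i (s ! i)) (lbl E s i y)" using v i by (simp add: valid_def)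
qed

lemma extend:
  assumes fin: "finite V" and v0: "valid p V E s0" and q0: "Q s0"
    and step: "\<And>s. valid p V E s \<Longrightarrow> Q s \<Longrightarrow> set s \<noteq> V \<Longrightarrow>
       \<exists>x\<in>V - set s. Q (s @ [x]) \<and> (\<forall>y\<in>V - set s. \<not> p (lbl E s (length s) x) (lbl E s (length s) y))"
  shows "\<exists>s. label_search_ordering p V E s \<and> Q s"
  using v0 q0
proof (induction "card V - length s0" arbitrary: s0 rule: less_induct)
  case less
  show ?case
  proof (cases "set s0 = V")
    case True
    then show ?thesis using valid_full less.prems by blast
  next
    case False
    obtain x where x: "x \<in> V - set s0" "Q (s0 @ [x])"
      and m: "\<forall>y\<in>V - set s0. \<not> p (lbl E s0 (length s0) x) (lbl E s0 (length s0) y)"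
      using step[OF less.prems False] by blast
    have v1: "valid p V E (s0 @ [x])" using less.prems(1) x(1) m by (rule valid_snoc)
    have d: "distinct s0" "set s0 \<subseteq> V" using less.prems by (simp_all add: valid_def)
    have "set s0 \<subset> V" using d False by blast
    then have "card (set s0) < card V" using fin by (simp add: psubset_card_mono)
    then have "length s0 < card V" using distinct_card[OF d(1)] by simp
    then have "card V - length (s0 @ [x]) < card V - length s0" by simp
    then show ?thesis using less.hyps v1 x(2) by blast
  qed
qed



lemma argmax_nat:
  fixes f :: "'a \<Rightarrow> nat"
  assumes "finite C" "C \<noteq> {}"
  shows "\<exists>x\<in>C. \<forall>y\<in>C. f y \<le> f x"
proof -
  have "Max (f ` C) \<in> f ` C" using assms by simp
  then obtain x where x: "x \<in> C" "f x = Max (f ` C)" by auto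
  have "\<forall>y\<in>C. f y \<le> f x" using x assms by simp
  then show ?thesis using x by blast
qed

lemma valid_single:
  assumes "v \<in> V" "\<not> p {} {}"
  shows "valid p V E [v]"
proof -
  have "lbl E [v] 0 y = {}" for y by (simp add: lbl_def)
  then show ?thesis using assms by (simp add: valid_def)
qed

lemma lbl_mem: "j < i \<Longrightarrow> E (s ! j) x \<Longrightarrow> Suc j \<in> lbl E s i x"
  by (auto simp: lbl_def)

lemma lbl_memD: "k \<in> lbl E s i x \<Longrightarrow> \<exists>j. k = Suc j \<and> j < i \<and> E (s ! j) x"
  by (auto simp: lbl_def)

lemma gs_last_exists:
  assumes fin: "finite V" and c: "connected_on (V - {v}) E" and vV: "v \<in> V" and two: "2 \<le> card V"
  shows "\<exists>s. GS_ordering V E s \<and> s \<noteq> [] \<and> last s = v"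
proof -
  have "V - {v} \<noteq> {}"
  proof
    assume "V - {v} = {}"
    then have "V \<subseteq> {v}" by blast
    then have "card V \<le> card {v}" by (rule card_mono[rotated]) simp
    then show False using two by simp
  qed
  then obtain u where u: "u \<in> V" "u \<noteq> v" by blast
  define Q where "Q s \<longleftrightarrow> s \<noteq> [] \<and> (v \<in> set s \<longrightarrow> last s = v \<and> set s = V)" for s
  have "\<not> gs_prec {} {}" by (simp add: gs_prec_def)
  then have v0: "valid gs_prec V E [u]" using u by (intro valid_single)
  have q0: "Q [u]" using u by (simp add: Q_def)
  have "\<exists>s. GS_ordering V E s \<and> Q s"
  proof (rule extend[where Q=Q, OF fin v0 q0])
    fix s assume vs: "valid gs_prec V E s" and qs: "Q s" and ns: "set s \<noteq> V"
    have vn: "v \<notin> set s" using qs ns by (simp add: Q_def)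
    have ne: "s \<noteq> []" using qs by (simp add: Q_def)
    have sV: "set s \<subseteq> V" using vs by (simp add: valid_def)
    show "\<exists>x\<in>V - set s. Q (s @ [x]) \<and>
        (\<forall>y\<in>V - set s. \<not> gs_prec (lbl E s (length s) x) (lbl E s (length s) y))"
    proof (cases "set s = V - {v}")
      case True
      have "V - set s = {v}" using True vV by blast
      moreover have "Q (s @ [v])" using True vV by (auto simp: Q_def)
      ultimately show ?thesis by (simp add: gs_prec_def)
    next
      case False
      have A: "set s \<subseteq> V - {v}" using sV vn by blast
      obtain b0 where b0: "b0 \<in> (V - {v}) - set s" using A False by blast
      have a0: "hd s \<in> set s" using ne by simp
      obtain a b where ab: "a \<in> set s" "b \<in> (V - {v}) - set s" "E a b"
        using crossing[OF c A a0 b0] by blast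
      obtain j where j: "j < length s" "a = s ! j" using ab(1) by (metis in_set_conv_nth)
      have "Suc j \<in> lbl E s (length s) b" using j ab(3) by (intro lbl_mem) simp_all
      then have "lbl E s (length s) b \<noteq> {}" by blast
      moreover have "Q (s @ [b])" using ab(2) vn by (auto simp: Q_def)
      moreover have "b \<in> V - set s" using ab(2) by blast
      ultimately show ?thesis by (auto simp: gs_prec_def)
    qed
  qed
  then obtain s where s: "GS_ordering V E s" "Q s" by blast
  then have "set s = V" by (simp add: label_search_ordering_def vertex_ordering_def)
  then show ?thesis using s vV by (auto simp: Q_def)
qed

definition dkey :: "nat set \<Rightarrow> nat" where
  "dkey A = (if A = {} then 0 else Suc (Max A))"

lemma dfs_prec_dkey: "dfs_prec A B \<Longrightarrow> dkey A < dkey B"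
  by (auto simp: dfs_prec_def dkey_def)

lemma dfs_exists:
  assumes fin: "finite V" and vV: "v \<in> V"
  shows "\<exists>s. DFS_ordering V E s \<and> s \<noteq> [] \<and> hd s = v"
proof -
  define Q where "Q s \<longleftrightarrow> s \<noteq> [] \<and> hd s = v" for s :: "'a list"
  have "\<not> dfs_prec {} {}" by (simp add: dfs_prec_def)
  then have v0: "valid dfs_prec V E [v]" using vV by (intro valid_single)
  have q0: "Q [v]" by (simp add: Q_def)
  have "\<exists>s. DFS_ordering V E s \<and> Q s"
  proof (rule extend[where Q=Q, OF fin v0 q0])
    fix s assume vs: "valid dfs_prec V E s" and qs: "Q s" and ns: "set s \<noteq> V"
    have sV: "set s \<subseteq> V" using vs by (simp add: valid_def)
    have "finite (V - set s)" "V - set s \<noteq> {}" using fin sV ns by auto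
    then obtain x where x: "x \<in> V - set s"
      and m: "\<forall>y\<in>V - set s. dkey (lbl E s (length s) y) \<le> dkey (lbl E s (length s) x)"
      using argmax_nat[of "V - set s" "\<lambda>y. dkey (lbl E s (length s) y)"] by blast
    have "\<forall>y\<in>V - set s. \<not> dfs_prec (lbl E s (length s) x) (lbl E s (length s) y)"
      using m dfs_prec_dkey leD by blast
    moreover have "Q (s @ [x])" using qs by (simp add: Q_def)
    ultimately show "\<exists>x\<in>V - set s. Q (s @ [x]) \<and>
        (\<forall>y\<in>V - set s. \<not> dfs_prec (lbl E s (length s) x) (lbl E s (length s) y))"
      using x by blast
  qed
  then show ?thesis by (auto simp: Q_def)
qed



lemma crit_snoc:
  assumes h: "\<forall>i. 2 \<le> i \<and> i < length s \<longrightarrow> (\<exists>j. 0 < j \<and> j < i \<and> E (s ! i) (s ! j))"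
    and n: "length s < 2 \<or> (\<exists>j. 0 < j \<and> j < length s \<and> E x (s ! j))"
  shows "\<forall>i. 2 \<le> i \<and> i < length (s @ [x]) \<longrightarrow> (\<exists>j. 0 < j \<and> j < i \<and> E ((s @ [x]) ! i) ((s @ [x]) ! j))"
proof (intro allI impI)
  fix i assume i: "2 \<le> i \<and> i < length (s @ [x])"
  show "\<exists>j. 0 < j \<and> j < i \<and> E ((s @ [x]) ! i) ((s @ [x]) ! j)"
  proof (cases "i < length s")
    case True
    then obtain j where "0 < j" "j < i" "E (s ! i) (s ! j)" using h i by blast
    then show ?thesis using True by (intro exI[of _ j]) (simp add: nth_append)
  next
    case False
    then have ii: "i = length s" using i by simp
    then obtain j where "0 < j" "j < length s" "E x (s ! j)" using n i by auto
    then show ?thesis using ii by (intro exI[of _ j]) (simp add: nth_append)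
  qed
qed

lemma mcs_exists:
  assumes fin: "finite V" and c: "connected_on (V - {v}) E" and vV: "v \<in> V"
    and sym: "\<forall>x y. E x y \<longrightarrow> E y x"
  shows "\<exists>s. MCS_ordering V E s \<and> s \<noteq> [] \<and> hd s = v \<and>
     (\<forall>i. 2 \<le> i \<and> i < length s \<longrightarrow> (\<exists>j. 0 < j \<and> j < i \<and> E (s ! i) (s ! j)))"
proof -
  define Q where "Q s \<longleftrightarrow> s \<noteq> [] \<and> hd s = v \<and>
     (\<forall>i. 2 \<le> i \<and> i < length s \<longrightarrow> (\<exists>j. 0 < j \<and> j < i \<and> E (s ! i) (s ! j)))" for s
  have "\<not> mcs_prec {} {}" by (simp add: mcs_prec_def)
  then have v0: "valid mcs_prec V E [v]" using vV by (intro valid_single)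
  have q0: "Q [v]" by (simp add: Q_def)
  have "\<exists>s. MCS_ordering V E s \<and> Q s"
  proof (rule extend[where Q=Q, OF fin v0 q0])
    fix s assume vs: "valid mcs_prec V E s" and qs: "Q s" and ns: "set s \<noteq> V"
    have sV: "set s \<subseteq> V" and d: "distinct s" using vs by (simp_all add: valid_def)
    have ne: "s \<noteq> []" and hs: "hd s = v"
      and cr: "\<forall>i. 2 \<le> i \<and> i < length s \<longrightarrow> (\<exists>j. 0 < j \<and> j < i \<and> E (s ! i) (s ! j))"
      using qs by (simp_all add: Q_def)
    have hd0: "hd s = s ! 0" using ne by (rule hd_conv_nth)
    define C where "C = V - set s"
    define L where "L y = lbl E s (length s) y" for y
    have fC: "finite C" "C \<noteq> {}" using fin sV ns by (auto simp: C_def)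
    obtain xm where xm: "xm \<in> C" and m: "\<forall>y\<in>C. card (L y) \<le> card (L xm)"
      using argmax_nat[OF fC, of "\<lambda>y. card (L y)"] by blast
    have goal: "\<exists>x\<in>C. Q (s @ [x]) \<and> (\<forall>y\<in>C. \<not> mcs_prec (L x) (L y))"
    proof (cases "length s < 2")
      case True
      have "Q (s @ [xm])" unfolding Q_def using ne hs crit_snoc[OF cr, of xm] True by simp
      moreover have "\<forall>y\<in>C. \<not> mcs_prec (L xm) (L y)" using m by (simp add: mcs_prec_def not_less)
      ultimately show ?thesis using xm by blast
    next
      case False
      have l1: "1 < length s" using False by simp
      have "(s ! 1 = s ! 0) = (1 = (0::nat))" using d l1 by (rule nth_eq_iff_index_eq) (use l1 in linarith)
      then have s10: "s ! 1 \<noteq> v" using hs hd0 by simp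
      define A where "A = set s - {v}"
      have A: "A \<subseteq> V - {v}" using sV by (auto simp: A_def)
      have a0: "s ! 1 \<in> A" using s10 l1 by (simp add: A_def)
      obtain b0 where b0C: "b0 \<in> C" using fC by blast
      have vs': "v \<in> set s" using hs ne by auto
      have b0: "b0 \<in> (V - {v}) - A" using b0C vs' by (auto simp: A_def C_def)
      obtain a b where ab: "a \<in> A" "b \<in> (V - {v}) - A" "E a b"
        using crossing[OF c A a0 b0] by blast
      obtain j where j: "j < length s" "a = s ! j" using ab(1) by (metis DiffD1 A_def in_set_conv_nth)
      have j0: "0 < j" using j ab(1) hs hd0 by (cases j) (auto simp: A_def)
      have bC: "b \<in> C" using ab(2) by (auto simp: A_def C_def)
      have Lb: "Suc j \<in> L b" unfolding L_def using j ab(3) by (intro lbl_mem) simp_all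
      show ?thesis
      proof (cases "2 \<le> card (L xm)")
        case True
        have "\<not> L xm \<subseteq> {1}"
        proof
          assume "L xm \<subseteq> {1}"
          then have "card (L xm) \<le> card {1::nat}" by (rule card_mono[rotated]) simp
          then show False using True by simp
        qed
        then obtain k where k: "k \<in> L xm" "k \<noteq> 1" by blast
        obtain j' where j': "k = Suc j'" "j' < length s" "E (s ! j') xm"
          using lbl_memD[OF k(1)[unfolded L_def]] by blast
        have "0 < j'" using j' k by (cases j') auto
        then have "\<exists>j. 0 < j \<and> j < length s \<and> E xm (s ! j)" using j' sym by blast
        then have "Q (s @ [xm])" unfolding Q_def using ne hs crit_snoc[OF cr] by simp
        moreover have "\<forall>y\<in>C. \<not> mcs_prec (L xm) (L y)" using m by (simp add: mcs_prec_def not_less)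
        ultimately show ?thesis using xm by blast
      next
        case False
        have "L b \<noteq> {}" using Lb by blast
        then have "1 \<le> card (L b)" unfolding L_def using lbl_finite
          by (metis One_nat_def Suc_leI card_gt_0_iff)
        then have "\<forall>y\<in>C. \<not> mcs_prec (L b) (L y)" using m False by (auto simp: mcs_prec_def)
        moreover have "\<exists>j. 0 < j \<and> j < length s \<and> E b (s ! j)" using j j0 ab(3) sym by blast
        then have "Q (s @ [b])" unfolding Q_def using ne hs crit_snoc[OF cr] by simp
        ultimately show ?thesis using bC by blast
      qed
    qed
    then show "\<exists>x\<in>V - set s. Q (s @ [x]) \<and>
        (\<forall>y\<in>V - set s. \<not> mcs_prec (lbl E s (length s) x) (lbl E s (length s) y))"
      by (simp add: C_def L_def)
  qed
  then show ?thesis by (auto simp: Q_def)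
qed



lemma dfs_root_leaf:
  assumes dfs: "DFS_ordering V E s" and c0: "connected_on V E" and c: "connected_on (V - {v}) E"
    and sym: "\<forall>x y. E x y \<longrightarrow> E y x" and hs: "hd s = v" and two: "2 \<le> length s"
  shows "L_root_leaf E s v"
proof -
  have gs: "GS_ordering V E s" using dfs by (rule dfs_gs)
  have d: "distinct s" and sV: "set s = V" using dfs by (simp_all add: label_search_ordering_def vertex_ordering_def)
  have ne: "s \<noteq> []" using two by auto
  have hd0: "hd s = s ! 0" using ne by (rule hd_conv_nth)
  have l1: "0 < (1::nat)" "1 < length s" using two by simp_all
  obtain j1 where "j1 < 1" "E (s ! j1) (s ! 1)" using gs_earlier[OF gs c0 l1] by blast
  then have e1: "E (s ! 1) (s ! 0)" using sym by simp
  have neq0: "s ! i \<noteq> v" if "0 < i" "i < length s" for i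
  proof -
    have "(s ! i = s ! 0) = (i = 0)" using d that(2) by (rule nth_eq_iff_index_eq) (use that in linarith)
    then show ?thesis using that hs hd0 by simp
  qed
  have crit: "\<forall>i. 2 \<le> i \<and> i < length s \<longrightarrow> (\<exists>j. 0 < j \<and> j < i \<and> E (s ! i) (s ! j))"
  proof (intro allI impI)
    fix i assume i: "2 \<le> i \<and> i < length s"
    show "\<exists>j. 0 < j \<and> j < i \<and> E (s ! i) (s ! j)"
    proof (rule ccontr)
      assume no: "\<not> (\<exists>j. 0 < j \<and> j < i \<and> E (s ! i) (s ! j))"
      define A where "A = set (take i s) - {v}"
      have A: "A \<subseteq> V - {v}" using sV set_take_subset[of i s] by (auto simp: A_def)
      have i2: "1 < i" "i < length s" "0 < i" using i by simp_all
      have "1 < length s" using i2 by linarith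
      then have "s ! 1 \<in> set (take i s)" by (rule nth_in_take[OF i2(1)])
      moreover have "s ! 1 \<noteq> v" by (rule neq0[OF l1])
      ultimately have a0: "s ! 1 \<in> A" unfolding A_def by blast
      have "s ! i \<noteq> v" by (rule neq0[OF i2(3) i2(2)])
      moreover have "s ! i \<notin> set (take i s)" using nth_notin_take[OF d i2(2)] .
      moreover have "s ! i \<in> V" using sV i2(2) nth_mem by blast
      ultimately have b0: "s ! i \<in> (V - {v}) - A" unfolding A_def by blast
      obtain a b where ab: "a \<in> A" "b \<in> (V - {v}) - A" "E a b"
        using crossing[OF c A a0 b0] by blast
      have aT: "a \<in> set (take i s)" using ab(1) by (simp add: A_def)
      obtain j where j: "j < i" "a = s ! j" using in_take_nth[OF aT] by blast
      have j0: "0 < j" using j ab(1) hs hd0 by (cases j) (auto simp: A_def)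
      have bt: "b \<notin> set (take i s)" "b \<in> set s" using ab(2) sV by (auto simp: A_def)
      show False
      proof (cases "b = s ! i")
        case True
        then show False using no j j0 ab(3) sym by blast
      next
        case False
        have ii: "i < length s" using i by simp
        have bd: "b \<in> set (drop (Suc i) s)" using bt False set_split3[OF ii] by blast
        have np: "\<not> dfs_prec (lbl E s i (s ! i)) (lbl E s i b)"
          using dfs ii bd by (simp add: label_search_ordering_def)
        have Lb: "Suc j \<in> lbl E s i b" using j ab(3) by (intro lbl_mem) simp_all
        have L1: "lbl E s i (s ! i) \<subseteq> {1}"
        proof
          fix k assume "k \<in> lbl E s i (s ! i)"
          then obtain j'' where j'': "k = Suc j''" "j'' < i" "E (s ! j'') (s ! i)" by (blast dest: lbl_memD)
          have "j'' = 0" using no j'' sym by (cases j'') auto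
          then show "k \<in> {1}" using j'' by simp
        qed
        have Mb: "Suc j \<le> Max (lbl E s i b)" using Lb lbl_finite by (rule Max_ge[rotated])
        show False
        proof (cases "lbl E s i (s ! i) = {}")
          case True
          then show False using np Lb by (auto simp: dfs_prec_def)
        next
          case False
          then have "lbl E s i (s ! i) = {1}" using L1 by blast
          then show False using np Lb Mb j0 by (auto simp: dfs_prec_def)
        qed
      qed
    qed
  qed
  have "L_root_leaf E s (hd s)" using d two e1 crit by (rule root_leaf_crit)
  then show ?thesis using hs by simp
qed



lemma gs_basic:
  assumes "label_search_ordering p V E s"
  shows "distinct s" "set s = V"
  using assms by (simp_all add: label_search_ordering_def vertex_ordering_def)

lemma gs_len:
  assumes "label_search_ordering p V E s" "2 \<le> card V"
  shows "2 \<le> length s"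
  using gs_basic[OF assms(1)] assms(2) distinct_card by metis

lemma leafL:
  assumes gs: "GS_ordering V E s" and c0: "connected_on V E" and sym: "\<forall>x y. E x y \<longrightarrow> E y x"
    and two: "2 \<le> card V" and lf: "L_leaf E s v"
  shows "connected_on (V - {v}) E"
proof -
  have par: "\<forall>i. 0 < i \<and> i < length s \<longrightarrow> (\<exists>j<i. L_parent E s (s ! i) = s ! j \<and> E (s ! i) (s ! j))"
    using L_parent_prop[OF gs c0 sym] by blast
  have "connected_on (set s - {v}) E"
    using gs_basic(1)[OF gs] sym gs_len[OF gs two] par lf[unfolded L_leaf_def] by (rule leaf_connected)
  then show ?thesis using gs_basic(2)[OF gs] by simp
qed

lemma leafF:
  assumes gs: "GS_ordering V E s" and c0: "connected_on V E" and sym: "\<forall>x y. E x y \<longrightarrow> E y x"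
    and two: "2 \<le> card V" and lf: "F_leaf E s v"
  shows "connected_on (V - {v}) E"
proof -
  have par: "\<forall>i. 0 < i \<and> i < length s \<longrightarrow> (\<exists>j<i. F_parent E s (s ! i) = s ! j \<and> E (s ! i) (s ! j))"
    using F_parent_prop[OF gs c0 sym] by blast
  have "connected_on (set s - {v}) E"
    using gs_basic(1)[OF gs] sym gs_len[OF gs two] par lf[unfolded F_leaf_def] by (rule leaf_connected)
  then show ?thesis using gs_basic(2)[OF gs] by simp
qed

lemma gs_root_crit:
  assumes gs: "GS_ordering V E s" and c0: "connected_on V E" and sym: "\<forall>x y. E x y \<longrightarrow> E y x"
    and two: "2 \<le> length s"
    and crit: "\<forall>i. 2 \<le> i \<and> i < length s \<longrightarrow> (\<exists>j. 0 < j \<and> j < i \<and> E (s ! i) (s ! j))"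
  shows "L_root_leaf E s (hd s)"
proof -
  have l1: "0 < (1::nat)" "1 < length s" using two by simp_all
  obtain j1 where "j1 < 1" "E (s ! j1) (s ! 1)" using gs_earlier[OF gs c0 l1] by blast
  then have e1: "E (s ! 1) (s ! 0)" using sym by simp
  show ?thesis using gs_basic(1)[OF gs] two e1 crit by (rule root_leaf_crit)
qed

lemma gs_last_leaves:
  assumes gs: "GS_ordering V E s" and c0: "connected_on V E" and sym: "\<forall>x y. E x y \<longrightarrow> E y x"
    and two: "2 \<le> card V"
  shows "L_branch_leaf E s (last s)" "F_branch_leaf E s (last s)"
proof -
  have parL: "\<forall>i. 0 < i \<and> i < length s \<longrightarrow> (\<exists>j<i. L_parent E s (s ! i) = s ! j \<and> E (s ! i) (s ! j))"
    using L_parent_prop[OF gs c0 sym] by blast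
  have parF: "\<forall>i. 0 < i \<and> i < length s \<longrightarrow> (\<exists>j<i. F_parent E s (s ! i) = s ! j \<and> E (s ! i) (s ! j))"
    using F_parent_prop[OF gs c0 sym] by blast
  show "L_branch_leaf E s (last s)"
    using last_leaf[OF gs_basic(1)[OF gs] gs_len[OF gs two] parL]
    by (simp add: L_branch_leaf_def L_leaf_def)
  show "F_branch_leaf E s (last s)"
    using last_leaf[OF gs_basic(1)[OF gs] gs_len[OF gs two] parF]
    by (simp add: F_branch_leaf_def F_leaf_def)
qed

theorem theorem1:
  fixes V :: "'a set" and E :: "'a \<Rightarrow> 'a \<Rightarrow> bool" and v :: 'a
  assumes "simple_graph V E" and "connected_on V E" and "card V \<ge> 2" and "v \<in> V"
  shows "((\<exists>\<sigma>. DFS_ordering V E \<sigma> \<and> hd \<sigma> = v \<and> L_root_leaf E \<sigma> v) \<longleftrightarrow> \<not> cut_vertex V E v)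
    \<and> ((\<forall>\<sigma>. DFS_ordering V E \<sigma> \<and> hd \<sigma> = v \<longrightarrow> L_root_leaf E \<sigma> v) \<longleftrightarrow> \<not> cut_vertex V E v)
    \<and> ((\<exists>\<sigma>. MCS_ordering V E \<sigma> \<and> L_root_leaf E \<sigma> v) \<longleftrightarrow> \<not> cut_vertex V E v)
    \<and> ((\<exists>\<sigma>. GS_ordering V E \<sigma> \<and> L_root_leaf E \<sigma> v) \<longleftrightarrow> \<not> cut_vertex V E v)
    \<and> ((\<exists>\<sigma>. GS_ordering V E \<sigma> \<and> L_branch_leaf E \<sigma> v) \<longleftrightarrow> \<not> cut_vertex V E v)
    \<and> ((\<exists>\<sigma>. GS_ordering V E \<sigma> \<and> F_branch_leaf E \<sigma> v) \<longleftrightarrow> \<not> cut_vertex V E v)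
    \<and> ((\<exists>\<sigma>. GS_ordering V E \<sigma> \<and> last \<sigma> = v) \<longleftrightarrow> \<not> cut_vertex V E v)"
proof -
  have fin: "finite V" and sym: "\<forall>x y. E x y \<longrightarrow> E y x" using assms(1) by (simp_all add: simple_graph_def)
  note c0 = assms(2) and two = assms(3) and vV = assms(4)
  have NC: "\<not> cut_vertex V E v \<longleftrightarrow> connected_on (V - {v}) E" using vV by (simp add: cut_vertex_def)
  have A1: "?thesis" if "connected_on (V - {v}) E"
  proof -
    note c = that
    obtain sd where sd: "DFS_ordering V E sd" "sd \<noteq> []" "hd sd = v" using dfs_exists[OF fin vV] by blast
    have dall: "\<forall>s. DFS_ordering V E s \<and> hd s = v \<longrightarrow> L_root_leaf E s v"
      using dfs_root_leaf[OF _ c0 c sym] gs_len two by blast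
    obtain sm where sm: "MCS_ordering V E sm" "sm \<noteq> []" "hd sm = v"
      "\<forall>i. 2 \<le> i \<and> i < length sm \<longrightarrow> (\<exists>j. 0 < j \<and> j < i \<and> E (sm ! i) (sm ! j))"
      using mcs_exists[OF fin c vV sym] by blast
    have smr: "L_root_leaf E sm v"
      using gs_root_crit[OF mcs_gs[OF sm(1)] c0 sym gs_len[OF sm(1) two] sm(4)] sm(3) by simp
    obtain sl where sl: "GS_ordering V E sl" "sl \<noteq> []" "last sl = v"
      using gs_last_exists[OF fin c vV two] by blast
    have "L_branch_leaf E sl v" "F_branch_leaf E sl v"
      using gs_last_leaves[OF sl(1) c0 sym two] sl(3) by simp_all
    then show ?thesis using NC c sd dall sm smr sl mcs_gs by blast
  qed
  have A2: "?thesis" if nc: "\<not> connected_on (V - {v}) E"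
  proof -
    obtain sd where sd: "DFS_ordering V E sd" "sd \<noteq> []" "hd sd = v" using dfs_exists[OF fin vV] by blast
    have noL: "\<not> L_leaf E s v" if "GS_ordering V E s" for s
      using leafL[OF that c0 sym two] nc by blast
    have noF: "\<not> F_leaf E s v" if "GS_ordering V E s" for s
      using leafF[OF that c0 sym two] nc by blast
    have noLast: "\<not> (GS_ordering V E s \<and> last s = v)" for s
      using gs_last_leaves(1)[of V E s] c0 sym two noL by (auto simp: L_branch_leaf_def)
    have "\<not> L_root_leaf E sd v" using noL[OF dfs_gs[OF sd(1)]] by (simp add: L_root_leaf_def)
    then have n2: "\<not> (\<forall>s. DFS_ordering V E s \<and> hd s = v \<longrightarrow> L_root_leaf E s v)" using sd by blast
    have n1: "\<not> (\<exists>s. DFS_ordering V E s \<and> hd s = v \<and> L_root_leaf E s v)"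
      using noL dfs_gs unfolding L_root_leaf_def by blast
    have n3: "\<not> (\<exists>s. MCS_ordering V E s \<and> L_root_leaf E s v)"
      using noL mcs_gs unfolding L_root_leaf_def by blast
    have n4: "\<not> (\<exists>s. GS_ordering V E s \<and> L_root_leaf E s v)"
      using noL unfolding L_root_leaf_def by blast
    have n5: "\<not> (\<exists>s. GS_ordering V E s \<and> L_branch_leaf E s v)"
      using noL unfolding L_branch_leaf_def by blast
    have n6: "\<not> (\<exists>s. GS_ordering V E s \<and> F_branch_leaf E s v)"
      using noF unfolding F_branch_leaf_def by blast
    have n7: "\<not> (\<exists>s. GS_ordering V E s \<and> last s = v)" using noLast by blast
    have "cut_vertex V E v" using NC nc by blast
    then show ?thesis using n1 n2 n3 n4 n5 n6 n7 by simp
  qed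
  show ?thesis using A1 A2 by blast
qed


end
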